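(* Let $A_1$, $A_2$ be distinct minimal ideals of a finite-dimensional Lie algebra $L$ over a field $F$. Then there is a bijection \[ \theta : \{A_1, (A_1+A_2)/A_1\} \to \{A_2, (A_1+A_2)/A_2\} \] (regarding $A_i$ as the chief factor $A_i/0$) such that each chief factor is isomorphic as an $L$-module to its image, and a chief factor in the domain is a Frattini chief factor if and only if its image under $\theta$ is a Frattini chief factor.
   Context: A chief factor of $L$ is a quotient $A/B$ of ideals $B\subsetneq A$ with no ideal of $L$ strictly between them. The Frattini ideal $\phi(L)$ is the largest ideal of $L$ contained in the intersection of all maximal subalgebras of $L$. A chief factor $A/B$ is a Frattini chief factor if $A/B \subseteq \phi(L/B)$. *)

theory Defs
  imports Complex_Main
begin

text \<open>A Lie algebra L over a field 'k is modelled as the whole type 'v (an abelian group)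
  with scalar multiplication sc and bracket br.\<close>

definition lie_algebra :: "('k::field \<Rightarrow> 'v::ab_group_add \<Rightarrow> 'v) \<Rightarrow> ('v \<Rightarrow> 'v \<Rightarrow> 'v) \<Rightarrow> bool" where
  "lie_algebra sc br \<longleftrightarrow> vector_space sc
     \<and> (\<forall>x y z. br (x + y) z = br x z + br y z)
     \<and> (\<forall>x y z. br x (y + z) = br x y + br x z)
     \<and> (\<forall>c x y. br (sc c x) y = sc c (br x y))
     \<and> (\<forall>c x y. br x (sc c y) = sc c (br x y))
     \<and> (\<forall>x. br x x = 0)
     \<and> (\<forall>x y z. br x (br y z) + br y (br z x) + br z (br x y) = 0)"

definition fin_dim :: "('k::field \<Rightarrow> 'v::ab_group_add \<Rightarrow> 'v) \<Rightarrow> bool" where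
  "fin_dim sc \<longleftrightarrow> (\<exists>B. finite B \<and> module.span sc B = UNIV)"

definition lie_subalgebra :: "('k::field \<Rightarrow> 'v::ab_group_add \<Rightarrow> 'v) \<Rightarrow> ('v \<Rightarrow> 'v \<Rightarrow> 'v) \<Rightarrow> 'v set \<Rightarrow> bool" where
  "lie_subalgebra sc br S \<longleftrightarrow> module.subspace sc S \<and> (\<forall>x\<in>S. \<forall>y\<in>S. br x y \<in> S)"

definition lie_ideal :: "('k::field \<Rightarrow> 'v::ab_group_add \<Rightarrow> 'v) \<Rightarrow> ('v \<Rightarrow> 'v \<Rightarrow> 'v) \<Rightarrow> 'v set \<Rightarrow> bool" where
  "lie_ideal sc br I \<longleftrightarrow> module.subspace sc I \<and> (\<forall>x. \<forall>y\<in>I. br x y \<in> I)"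

definition chief_factor :: "('k::field \<Rightarrow> 'v::ab_group_add \<Rightarrow> 'v) \<Rightarrow> ('v \<Rightarrow> 'v \<Rightarrow> 'v) \<Rightarrow> 'v set \<times> 'v set \<Rightarrow> bool" where
  "chief_factor sc br AB \<longleftrightarrow> (case AB of (A, B) \<Rightarrow>
     lie_ideal sc br A \<and> lie_ideal sc br B \<and> B \<subset> A \<and>
     \<not> (\<exists>C. lie_ideal sc br C \<and> B \<subset> C \<and> C \<subset> A))"

definition minimal_ideal :: "('k::field \<Rightarrow> 'v::ab_group_add \<Rightarrow> 'v) \<Rightarrow> ('v \<Rightarrow> 'v \<Rightarrow> 'v) \<Rightarrow> 'v set \<Rightarrow> bool" where
  "minimal_ideal sc br A \<longleftrightarrow> lie_ideal sc br A \<and> A \<noteq> {0} \<and>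
     \<not> (\<exists>C. lie_ideal sc br C \<and> {0} \<subset> C \<and> C \<subset> A)"

definition set_plus_v :: "'v::ab_group_add set \<Rightarrow> 'v set \<Rightarrow> 'v set" where
  "set_plus_v A B = {a + b | a b. a \<in> A \<and> b \<in> B}"

text \<open>Maximal subalgebras of L/B correspond to subalgebras M of L with B \<subseteq> M \<noteq> L that are
  maximal among such (M/B is then a maximal subalgebra of L/B).\<close>
definition max_subalg_over :: "('k::field \<Rightarrow> 'v::ab_group_add \<Rightarrow> 'v) \<Rightarrow> ('v \<Rightarrow> 'v \<Rightarrow> 'v) \<Rightarrow> 'v set \<Rightarrow> 'v set \<Rightarrow> bool" where
  "max_subalg_over sc br B M \<longleftrightarrow> lie_subalgebra sc br M \<and> B \<subseteq> M \<and> M \<noteq> UNIV \<and>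
     (\<forall>N. lie_subalgebra sc br N \<and> M \<subseteq> N \<and> N \<noteq> UNIV \<longrightarrow> N = M)"

text \<open>Preimage in L of the Frattini ideal phi(L/B): the largest ideal of L containing B that is
  contained in every maximal subalgebra of L containing B (taken as the union of all such ideals).\<close>
definition frattini_over :: "('k::field \<Rightarrow> 'v::ab_group_add \<Rightarrow> 'v) \<Rightarrow> ('v \<Rightarrow> 'v \<Rightarrow> 'v) \<Rightarrow> 'v set \<Rightarrow> 'v set" where
  "frattini_over sc br B = \<Union>{I. lie_ideal sc br I \<and> B \<subseteq> I \<and>
       (\<forall>M. max_subalg_over sc br B M \<longrightarrow> I \<subseteq> M)}"

definition frattini_chief_factor :: "('k::field \<Rightarrow> 'v::ab_group_add \<Rightarrow> 'v) \<Rightarrow> ('v \<Rightarrow> 'v \<Rightarrow> 'v) \<Rightarrow> 'v set \<times> 'v set \<Rightarrow> bool" where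
  "frattini_chief_factor sc br AB \<longleftrightarrow> (case AB of (A, B) \<Rightarrow>
     chief_factor sc br (A, B) \<and> A \<subseteq> frattini_over sc br B)"

text \<open>A/B and C/D are isomorphic as L-modules: there is a linear map f: A \<rightarrow> C with f(B) \<subseteq> D
  inducing a bijective L-module map A/B \<rightarrow> C/D.\<close>
definition factor_iso :: "('k::field \<Rightarrow> 'v::ab_group_add \<Rightarrow> 'v) \<Rightarrow> ('v \<Rightarrow> 'v \<Rightarrow> 'v) \<Rightarrow> 'v set \<times> 'v set \<Rightarrow> 'v set \<times> 'v set \<Rightarrow> bool" where
  "factor_iso sc br AB CD \<longleftrightarrow> (case AB of (A, B) \<Rightarrow> case CD of (C, D) \<Rightarrow>
     (\<exists>f. (\<forall>x\<in>A. f x \<in> C)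
        \<and> (\<forall>x\<in>A. \<forall>y\<in>A. f (x + y) = f x + f y)
        \<and> (\<forall>c. \<forall>x\<in>A. f (sc c x) = sc c (f x))
        \<and> (\<forall>x\<in>B. f x \<in> D)
        \<and> (\<forall>x\<in>A. f x \<in> D \<longrightarrow> x \<in> B)
        \<and> (\<forall>y\<in>C. \<exists>x\<in>A. y - f x \<in> D)
        \<and> (\<forall>z. \<forall>x\<in>A. f (br z x) - br z (f x) \<in> D)))"

end

theory Submission imports Defs begin

lemma grp1: "(a::'a::ab_group_add) + - b + - c = 0 \<Longrightarrow> a = c + b"
  by (simp add: algebra_simps)

locale LA = finite_dimensional_vector_space sc Basis
  for sc :: "'k::field \<Rightarrow> 'v::ab_group_add \<Rightarrow> 'v" and Basis +
  fixes br :: "'v \<Rightarrow> 'v \<Rightarrow> 'v"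
  assumes addL: "br (x + y) z = br x z + br y z"
  and addR: "br x (y + z) = br x y + br x z"
  and scL: "br (sc c x) y = sc c (br x y)"
  and scR: "br x (sc c y) = sc c (br x y)"
  and alt: "br x x = 0"
  and jac: "br x (br y z) + br y (br z x) + br z (br x y) = 0"
begin

lemma br0L[simp]: "br 0 y = 0"
  using addL[of 0 0 y] by simp
lemma br0R[simp]: "br x 0 = 0"
  using addR[of x 0 0] by simp
lemma anti: "br y x = - br x y"
proof -
  have "br x y + br y x = br (x+y) (x+y)" by (simp add: addL addR add.commute alt[of x] alt[of y])
  also have "\<dots> = 0" by (rule alt)
  finally have "br x y + br y x = 0" .
  then show ?thesis by (metis neg_eq_iff_add_eq_0)
qed
lemma negR: "br x (- y) = - br x y"
proof -
  have "br x y + br x (- y) = 0" using addR[of x y "-y"] by simp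
  then show ?thesis by (metis neg_eq_iff_add_eq_0)
qed
lemma negL: "br (- x) y = - br x y"
proof -
  have "br x y + br (- x) y = 0" using addL[of x "-x" y] by simp
  then show ?thesis by (metis neg_eq_iff_add_eq_0)
qed
lemma diffR: "br x (y - z) = br x y - br x z"
  unfolding diff_conv_add_uminus by (simp only: addR negR)
lemma diffL: "br (x - y) z = br x z - br y z"
  unfolding diff_conv_add_uminus by (simp only: addL negL)
lemma jac2: "br x (br y z) = br (br x y) z + br y (br x z)"
proof -
  have e1: "br y (br z x) = - br y (br x z)" unfolding anti[of z x] by (rule negR)
  have e2: "br z (br x y) = - br (br x y) z" by (rule anti)
  have "br x (br y z) + - br y (br x z) + - br (br x y) z = 0" using jac[of x y z] unfolding e1 e2 .
  then show ?thesis by (rule grp1)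
qed

lemma spv: "z \<in> set_plus_v A B \<longleftrightarrow> (\<exists>a\<in>A. \<exists>b\<in>B. z = a + b)"
  by (auto simp: set_plus_v_def)

lemma spv_comm_sub: "set_plus_v A B \<subseteq> set_plus_v B A"
proof
  fix z assume "z \<in> set_plus_v A B"
  then obtain a b where ab: "a \<in> A" "b \<in> B" "z = a + b" by (auto simp: spv)
  then have "z = b + a" by (simp add: add.commute)
  then show "z \<in> set_plus_v B A" using ab unfolding spv by blast
qed

lemma spv_comm: "set_plus_v A B = set_plus_v B A"
  using spv_comm_sub by blast

lemma ideal_sub: "lie_ideal sc br I \<Longrightarrow> subspace I"
  by (simp add: lie_ideal_def)
lemma ideal_br: "lie_ideal sc br I \<Longrightarrow> y \<in> I \<Longrightarrow> br x y \<in> I"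
  by (simp add: lie_ideal_def)
lemma ideal_brL: "lie_ideal sc br I \<Longrightarrow> y \<in> I \<Longrightarrow> br y x \<in> I"
  by (metis anti ideal_br ideal_sub subspace_neg)
lemma ideal_subalg: "lie_ideal sc br I \<Longrightarrow> lie_subalgebra sc br I"
  by (simp add: lie_ideal_def lie_subalgebra_def)
lemma subalg_sub: "lie_subalgebra sc br I \<Longrightarrow> subspace I"
  by (simp add: lie_subalgebra_def)
lemma subalg_br: "lie_subalgebra sc br I \<Longrightarrow> x \<in> I \<Longrightarrow> y \<in> I \<Longrightarrow> br x y \<in> I"
  by (simp add: lie_subalgebra_def)
lemma ideal_inter: "lie_ideal sc br A \<Longrightarrow> lie_ideal sc br B \<Longrightarrow> lie_ideal sc br (A \<inter> B)"
  by (simp add: lie_ideal_def subspace_inter)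
lemma subalg_inter: "lie_subalgebra sc br A \<Longrightarrow> lie_subalgebra sc br B \<Longrightarrow> lie_subalgebra sc br (A \<inter> B)"
  by (simp add: lie_subalgebra_def subspace_inter)
lemma spv_sub: "subspace A \<Longrightarrow> subspace B \<Longrightarrow> subspace (set_plus_v A B)"
  unfolding set_plus_v_def by (rule subspace_sums)

lemma subalg_sum:
  assumes X: "lie_ideal sc br X" and S: "lie_subalgebra sc br S"
  shows "lie_subalgebra sc br (set_plus_v X S)"
  unfolding lie_subalgebra_def
proof (intro conjI ballI)
  show "subspace (set_plus_v X S)" using X S by (simp add: spv_sub ideal_sub subalg_sub)
  fix u v assume "u \<in> set_plus_v X S" "v \<in> set_plus_v X S"
  then obtain a b a' b' where u: "a \<in> X" "b \<in> S" "u = a + b" and v: "a' \<in> X" "b' \<in> S" "v = a' + b'"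
    by (auto simp: spv)
  have e: "br u v = (br a v + br b a') + br b b'" using u v by (simp add: addL addR add.assoc)
  moreover have "br a v \<in> X" using ideal_brL[OF X u(1)] .
  moreover have "br b a' \<in> X" using ideal_br[OF X v(1)] .
  ultimately have "br a v + br b a' \<in> X" using subspace_add[OF ideal_sub[OF X]] by blast
  moreover have "br b b' \<in> S" using S u v by (simp add: subalg_br)
  ultimately show "br u v \<in> set_plus_v X S" unfolding spv e by blast
qed

lemma ideal_sum: "lie_ideal sc br A \<Longrightarrow> lie_ideal sc br B \<Longrightarrow> lie_ideal sc br (set_plus_v A B)"
  unfolding lie_ideal_def
proof (intro conjI allI ballI)
  assume A: "subspace A \<and> (\<forall>x. \<forall>y\<in>A. br x y \<in> A)" and B: "subspace B \<and> (\<forall>x. \<forall>y\<in>B. br x y \<in> B)"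
  show "subspace (set_plus_v A B)" using A B by (simp add: spv_sub)
  fix x y assume "y \<in> set_plus_v A B"
  then obtain a b where "a \<in> A" "b \<in> B" "y = a + b" by (auto simp: spv)
  moreover have "br x a \<in> A" "br x b \<in> B" using A B \<open>a \<in> A\<close> \<open>b \<in> B\<close> by auto
  ultimately show "br x y \<in> set_plus_v A B" unfolding spv using addR[of x a b] \<open>y = a + b\<close> by blast
qed

lemma minimal_eq:
  assumes "minimal_ideal sc br A" "lie_ideal sc br C" "C \<subseteq> A" "C \<noteq> {0}"
  shows "C = A"
proof -
  have "0 \<in> C" using assms(2) by (simp add: ideal_sub subspace_0)
  then have "{0} \<subset> C" using assms(4) by blast
  then show ?thesis using assms(1,2,3) unfolding minimal_ideal_def by blast
qed

definition pairOK where
  "pairOK X Y \<longleftrightarrow> minimal_ideal sc br X \<and> minimal_ideal sc br Y \<and> X \<noteq> Y"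

lemma pairOK_sym: "pairOK X Y \<Longrightarrow> pairOK Y X"
  by (auto simp: pairOK_def)

lemma pr_facts:
  assumes "pairOK X Y"
  shows "lie_ideal sc br X" "lie_ideal sc br Y" "subspace X" "subspace Y" "X \<noteq> {0}" "Y \<noteq> {0}"
    "0 \<in> X" "0 \<in> Y"
  using assms by (auto simp: pairOK_def minimal_ideal_def lie_ideal_def subspace_0)

lemma inter0:
  assumes pr: "pairOK X Y" shows "X \<inter> Y = {0}"
proof (rule ccontr)
  assume ne: "X \<inter> Y \<noteq> {0}"
  have i: "lie_ideal sc br (X \<inter> Y)" using pr_facts[OF pr] by (simp add: ideal_inter)
  have "X \<inter> Y = X" using minimal_eq[OF _ i _ ne] pr by (auto simp: pairOK_def)
  moreover have "X \<inter> Y = Y" using minimal_eq[OF _ i _ ne] pr by (auto simp: pairOK_def)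
  ultimately show False using pr by (auto simp: pairOK_def)
qed

lemma comm0:
  assumes pr: "pairOK X Y" and "a \<in> X" "b \<in> Y" shows "br a b = 0"
proof -
  have "br a b \<in> X" using assms pr_facts[OF pr] by (simp add: ideal_brL)
  moreover have "br a b \<in> Y" using assms pr_facts[OF pr] by (simp add: ideal_br)
  ultimately show ?thesis using inter0[OF pr] by blast
qed

lemma comm0': "pairOK X Y \<Longrightarrow> a \<in> X \<Longrightarrow> b \<in> Y \<Longrightarrow> br b a = 0"
  by (metis comm0 anti neg_equal_0_iff_equal)

lemma chief_min: "minimal_ideal sc br X \<Longrightarrow> chief_factor sc br (X, {0})"
  unfolding chief_factor_def minimal_ideal_def
  by (auto simp: lie_ideal_def subspace_0)

lemma chief_sum:
  assumes pr: "pairOK X Y" shows "chief_factor sc br (set_plus_v X Y, X)"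
proof -
  note f = pr_facts[OF pr]
  have XS: "X \<subseteq> set_plus_v X Y" using f by (force simp: spv)
  have YS: "Y \<subseteq> set_plus_v X Y" using f by (force simp: spv)
  have ne: "set_plus_v X Y \<noteq> X"
  proof
    assume "set_plus_v X Y = X"
    then have "Y \<subseteq> X" using YS by auto
    then have "X \<inter> Y = Y" by auto
    then show False using inter0[OF pr] f by auto
  qed
  have noC: "\<not> (\<exists>C. lie_ideal sc br C \<and> X \<subset> C \<and> C \<subset> set_plus_v X Y)"
  proof
    assume "\<exists>C. lie_ideal sc br C \<and> X \<subset> C \<and> C \<subset> set_plus_v X Y"
    then obtain C where C: "lie_ideal sc br C" "X \<subset> C" "C \<subset> set_plus_v X Y" by blast
    have iCY: "lie_ideal sc br (C \<inter> Y)" using C f by (simp add: ideal_inter)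
    show False
    proof (cases "C \<inter> Y = {0}")
      case True
      obtain c where c: "c \<in> C" "c \<notin> X" using C by blast
      have "c \<in> set_plus_v X Y" using C c by blast
      then obtain a b where ab: "a \<in> X" "b \<in> Y" "c = a + b" by (auto simp: spv)
      have "b = c - a" using ab by simp
      moreover have "a \<in> C" using C ab by blast
      ultimately have "b \<in> C" using subspace_diff[OF ideal_sub[OF C(1)] c(1)] by simp
      then have "b = 0" using True ab by auto
      then show False using c ab by simp
    next
      case False
      then have "C \<inter> Y = Y" using minimal_eq[OF _ iCY _ False] pr by (auto simp: pairOK_def)
      have "set_plus_v X Y \<subseteq> C"
      proof
        fix z assume "z \<in> set_plus_v X Y"
        then obtain a b where "a \<in> X" "b \<in> Y" "z = a + b" by (auto simp: spv)
        moreover have "a \<in> C" "b \<in> C" using C \<open>C \<inter> Y = Y\<close> \<open>a \<in> X\<close> \<open>b \<in> Y\<close> by blast+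
        ultimately show "z \<in> C" using subspace_add[OF ideal_sub[OF C(1)]] by simp
      qed
      then show False using C by auto
    qed
  qed
  have i: "lie_ideal sc br (set_plus_v X Y)" using f by (simp add: ideal_sum)
  have ps: "X \<subset> set_plus_v X Y" using XS ne by (simp add: psubset_eq)
  show ?thesis unfolding chief_factor_def prod.case
    using i f(1) ps noC by simp
qed
definition maxsub where "maxsub M \<longleftrightarrow> max_subalg_over sc br {} M"

lemma mso: "max_subalg_over sc br B M \<longleftrightarrow> maxsub M \<and> B \<subseteq> M"
  unfolding maxsub_def max_subalg_over_def by auto

lemma maxsub_D: assumes "maxsub M"
  shows "lie_subalgebra sc br M" "subspace M" "M \<noteq> UNIV"
    "\<And>N. lie_subalgebra sc br N \<Longrightarrow> M \<subseteq> N \<Longrightarrow> N \<noteq> UNIV \<Longrightarrow> N = M"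
  using assms unfolding maxsub_def max_subalg_over_def lie_subalgebra_def by auto

lemma frat:
  assumes "chief_factor sc br (A, B)"
  shows "frattini_chief_factor sc br (A, B) \<longleftrightarrow> (\<forall>M. maxsub M \<and> B \<subseteq> M \<longrightarrow> A \<subseteq> M)"
proof -
  have iA: "lie_ideal sc br A" and BA: "B \<subseteq> A" using assms unfolding chief_factor_def by auto
  show ?thesis
  proof
    assume "frattini_chief_factor sc br (A, B)"
    then have "A \<subseteq> frattini_over sc br B" unfolding frattini_chief_factor_def by simp
    then show "\<forall>M. maxsub M \<and> B \<subseteq> M \<longrightarrow> A \<subseteq> M"
      unfolding frattini_over_def mso by blast
  next
    assume H: "\<forall>M. maxsub M \<and> B \<subseteq> M \<longrightarrow> A \<subseteq> M"
    have "A \<subseteq> frattini_over sc br B"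
      unfolding frattini_over_def mso using iA BA H by blast
    then show "frattini_chief_factor sc br (A, B)"
      unfolding frattini_chief_factor_def using assms by simp
  qed
qed

definition PP where "PP X \<longleftrightarrow> (\<forall>M. maxsub M \<longrightarrow> X \<subseteq> M)"
definition QQ where "QQ X Y \<longleftrightarrow> (\<forall>M. maxsub M \<and> Y \<subseteq> M \<longrightarrow> X \<subseteq> M)"

lemma fr_min:
  assumes "minimal_ideal sc br X"
  shows "frattini_chief_factor sc br (X, {0}) \<longleftrightarrow> PP X"
proof -
  have "\<And>M. maxsub M \<Longrightarrow> {0} \<subseteq> M" using maxsub_D(2) subspace_0 by blast
  then show ?thesis using frat[OF chief_min[OF assms]] unfolding PP_def by blast
qed

lemma fr_sum1:
  assumes pr: "pairOK X Y"
  shows "frattini_chief_factor sc br (set_plus_v X Y, Y) \<longleftrightarrow> QQ X Y"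
proof -
  have c: "chief_factor sc br (set_plus_v X Y, Y)"
    using chief_sum[OF pairOK_sym[OF pr]] unfolding spv_comm[of Y X] .
  have e: "set_plus_v X Y \<subseteq> M \<longleftrightarrow> X \<subseteq> M" if "maxsub M" "Y \<subseteq> M" for M
  proof
    assume "set_plus_v X Y \<subseteq> M"
    moreover have "X \<subseteq> set_plus_v X Y" using pr_facts[OF pr] by (force simp: spv)
    ultimately show "X \<subseteq> M" by blast
  next
    assume XM: "X \<subseteq> M"
    show "set_plus_v X Y \<subseteq> M"
    proof
      fix z assume "z \<in> set_plus_v X Y"
      then obtain a b where "a \<in> X" "b \<in> Y" "z = a + b" by (auto simp: spv)
      then show "z \<in> M" using XM that subspace_add[OF maxsub_D(2)[OF that(1)]] by blast
    qed
  qed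
  show ?thesis unfolding frat[OF c] QQ_def using e by blast
qed

lemma fr_sum2:
  assumes pr: "pairOK X Y"
  shows "frattini_chief_factor sc br (set_plus_v X Y, X) \<longleftrightarrow> QQ Y X"
  using fr_sum1[OF pairOK_sym[OF pr]] unfolding spv_comm[of Y X] .

lemma greatest:
  assumes "R S0" "\<And>S. R S \<Longrightarrow> subspace S"
  shows "\<exists>M. R M \<and> (\<forall>S. R S \<and> M \<subseteq> S \<longrightarrow> S = M)"
proof -
  have "\<exists>n. (\<exists>S. R S \<and> dim S = n) \<and> (\<forall>m. (\<exists>S. R S \<and> dim S = m) \<longrightarrow> m \<le> n)"
  proof (rule ex_has_greatest_nat[where P="\<lambda>n. \<exists>S. R S \<and> dim S = n" and k="dim S0" and b="Suc dimension"])
    show "\<exists>S. R S \<and> dim S = dim S0" using assms(1) by blast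
  next
    show "\<forall>y. (\<exists>S. R S \<and> dim S = y) \<longrightarrow> y < Suc dimension"
    proof (intro allI impI)
      fix y assume "\<exists>S. R S \<and> dim S = y"
      then obtain S where "dim S = y" by blast
      then show "y < Suc dimension" using dim_subset_UNIV[of S] by simp
    qed
  qed
  then obtain n where n1: "\<exists>S. R S \<and> dim S = n" and n2: "\<forall>m. (\<exists>S. R S \<and> dim S = m) \<longrightarrow> m \<le> n"
    by blast
  from n1 obtain M where M: "R M" "dim M = n" by blast
  have mx: "dim S \<le> n" if "R S" for S using n2 that by blast
  have "S = M" if "R S" "M \<subseteq> S" for S
  proof -
    have "M = S"
    proof (rule subspace_dim_equal)
      show "subspace M" using assms(2) M(1) .
      show "subspace S" using assms(2) that(1) .
      show "M \<subseteq> S" using that(2) .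
      show "dim S \<le> dim M" using mx[OF that(1)] M(2) by simp
    qed
    then show ?thesis by simp
  qed
  then show ?thesis using M by blast
qed

lemma ex_maxsub:
  assumes "lie_subalgebra sc br N" "N \<noteq> UNIV"
  shows "\<exists>M. maxsub M \<and> N \<subseteq> M"
proof -
  obtain M where M: "lie_subalgebra sc br M \<and> N \<subseteq> M \<and> M \<noteq> UNIV"
    and mx: "\<forall>S. (lie_subalgebra sc br S \<and> N \<subseteq> S \<and> S \<noteq> UNIV) \<and> M \<subseteq> S \<longrightarrow> S = M"
    using greatest[of "\<lambda>S. lie_subalgebra sc br S \<and> N \<subseteq> S \<and> S \<noteq> UNIV" N] assms subalg_sub
    by blast
  have "maxsub M" unfolding maxsub_def max_subalg_over_def using M mx by blast
  then show ?thesis using M by blast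
qed

lemma maxsub_sum:
  assumes "maxsub M" "lie_ideal sc br X" "\<not> X \<subseteq> M"
  shows "set_plus_v X M = UNIV"
proof (rule ccontr)
  assume ne: "set_plus_v X M \<noteq> UNIV"
  have s: "lie_subalgebra sc br (set_plus_v X M)"
    using subalg_sum[OF assms(2) maxsub_D(1)[OF assms(1)]] .
  have "0 \<in> X" using assms(2) ideal_sub subspace_0 by blast
  then have "M \<subseteq> set_plus_v X M" by (force simp: spv)
  then have eq: "set_plus_v X M = M" using maxsub_D(4)[OF assms(1) s _ ne] by blast
  have "0 \<in> M" using maxsub_D(2)[OF assms(1)] subspace_0 by blast
  then have "X \<subseteq> set_plus_v X M" by (force simp: spv)
  then show False using eq assms(3) by blast
qed

lemma pow_add: "(br x ^^ n) (u + v) = (br x ^^ n) u + (br x ^^ n) v"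
  by (induction n) (simp_all add: addR)
lemma pow_sc: "(br x ^^ n) (sc c u) = sc c ((br x ^^ n) u)"
  by (induction n) (simp_all add: scR)
lemma pow_zero: "(br x ^^ n) 0 = 0"
  by (induction n) simp_all
lemma pow_neg: "(br x ^^ n) (- u) = - (br x ^^ n) u"
  by (induction n) (simp_all add: negR)
lemma pow_diff: "(br x ^^ n) (u - v) = (br x ^^ n) u - (br x ^^ n) v"
  unfolding diff_conv_add_uminus by (simp only: pow_add pow_neg)
lemma pow_Suc': "(br x ^^ Suc n) u = (br x ^^ n) (br x u)"
  by (simp only: funpow_Suc_right comp_apply)
lemma pow_plus: "(br x ^^ (m + n)) u = (br x ^^ m) ((br x ^^ n) u)"
  by (simp only: funpow_add comp_apply)

lemma pow_ideal:
  assumes "lie_ideal sc br X" "x \<in> X" "n \<ge> 1"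
  shows "(br x ^^ n) u \<in> X"
proof -
  obtain m where "n = Suc m" using assms(3) by (cases n) auto
  then have "(br x ^^ n) u = br x ((br x ^^ m) u)" by simp
  then show ?thesis using ideal_brL[OF assms(1,2)] by simp
qed

lemma leib:
  "(br x ^^ a) y = 0 \<Longrightarrow> (br x ^^ b) z = 0 \<Longrightarrow> a + b \<le> n \<Longrightarrow> (br x ^^ n) (br y z) = 0"
proof (induction n arbitrary: a b y z)
  case 0
  then have "y = 0" by simp
  then show ?case by simp
next
  case (Suc n)
  show ?case
  proof (cases "a = 0 \<or> b = 0")
    case True
    then have "y = 0 \<or> z = 0" using Suc.prems by auto
    then show ?thesis by (auto simp: pow_zero)
  next
    case False
    then obtain a' b' where ab: "a = Suc a'" "b = Suc b'" by (metis not0_implies_Suc)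
    have y': "(br x ^^ a') (br x y) = 0" using Suc.prems(1) ab(1) pow_Suc'[where x=x and n=a' and u=y] by simp
    have z': "(br x ^^ b') (br x z) = 0" using Suc.prems(2) ab(2) pow_Suc'[where x=x and n=b' and u=z] by simp
    have 1: "(br x ^^ n) (br (br x y) z) = 0"
      using Suc.IH[OF y' Suc.prems(2)] Suc.prems(3) ab by simp
    have 2: "(br x ^^ n) (br y (br x z)) = 0"
      using Suc.IH[OF Suc.prems(1) z'] Suc.prems(3) ab by simp
    have "(br x ^^ Suc n) (br y z) = (br x ^^ n) (br (br x y) z) + (br x ^^ n) (br y (br x z))"
      by (simp only: pow_Suc' jac2[where x=x and y=y and z=z] pow_add)
    then show ?thesis using 1 2 by simp
  qed
qed

definition L0 where "L0 x = {y. \<exists>n. (br x ^^ n) y = 0}"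

lemma L0_subalg: "lie_subalgebra sc br (L0 x)"
  unfolding lie_subalgebra_def
proof (intro conjI ballI)
  show "subspace (L0 x)"
  proof (rule subspaceI)
    have "(br x ^^ 0) 0 = 0" by simp
    then show "0 \<in> L0 x" unfolding L0_def by blast
  next
    fix u v assume "u \<in> L0 x" "v \<in> L0 x"
    then obtain n m where n: "(br x ^^ n) u = 0" and m: "(br x ^^ m) v = 0" by (auto simp: L0_def)
    have "(br x ^^ (m + n)) u = 0" using n by (simp add: pow_plus pow_zero)
    moreover have "(br x ^^ (m + n)) v = 0" using m pow_plus[where x=x and m=n and n=m and u=v] by (simp add: pow_zero add.commute)
    ultimately have "(br x ^^ (m + n)) (u + v) = 0" by (simp add: pow_add)
    then show "u + v \<in> L0 x" unfolding L0_def by blast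
  next
    fix c u assume "u \<in> L0 x"
    then obtain n where n: "(br x ^^ n) u = 0" by (auto simp: L0_def)
    then have "(br x ^^ n) (sc c u) = 0" by (simp add: pow_sc)
    then show "sc c u \<in> L0 x" unfolding L0_def by blast
  qed
next
  fix u v assume "u \<in> L0 x" "v \<in> L0 x"
  then obtain n m where n: "(br x ^^ n) u = 0" and m: "(br x ^^ m) v = 0" by (auto simp: L0_def)
  have "(br x ^^ (n + m)) (br u v) = 0" using leib[OF n m] by simp
  then show "br u v \<in> L0 x" unfolding L0_def by blast
qed

lemma fitting:
  assumes X: "lie_ideal sc br X" and x: "x \<in> X"
  shows "\<exists>a\<in>X. y - a \<in> L0 x"
proof -
  define I where "I n = range (br x ^^ n)" for n
  have sI: "subspace (I n)" for n
    unfolding I_def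
  proof (rule subspaceI)
    show "0 \<in> range (br x ^^ n)" using pow_zero[where x=x and n=n] by (metis rangeI)
  next
    fix u v assume "u \<in> range (br x ^^ n)" "v \<in> range (br x ^^ n)"
    then obtain u' v' where "u = (br x ^^ n) u'" "v = (br x ^^ n) v'" by auto
    then have "u + v = (br x ^^ n) (u' + v')" by (simp add: pow_add)
    then show "u + v \<in> range (br x ^^ n)" by simp
  next
    fix c u assume "u \<in> range (br x ^^ n)"
    then obtain u' where "u = (br x ^^ n) u'" by auto
    then have "sc c u = (br x ^^ n) (sc c u')" by (simp add: pow_sc)
    then show "sc c u \<in> range (br x ^^ n)" by simp
  qed
  have mono: "I (m + n) \<subseteq> I m" for m n
  proof
    fix w assume "w \<in> I (m + n)"
    then obtain u where "w = (br x ^^ (m + n)) u" unfolding I_def by auto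
    then have "w = (br x ^^ m) ((br x ^^ n) u)" by (simp add: pow_plus)
    then show "w \<in> I m" unfolding I_def by simp
  qed
  define d where "d = (LEAST d. \<exists>n\<ge>1. dim (I n) = d)"
  have "\<exists>n\<ge>1. dim (I n) = d" unfolding d_def
    by (rule LeastI_ex) (rule exI[of _ "dim (I 1)"], rule exI[of _ 1], simp)
  then obtain N where N: "N \<ge> 1" "dim (I N) = d" by blast
  have dle: "d \<le> dim (I m)" if "m \<ge> 1" for m
    unfolding d_def by (rule Least_le) (use that in blast)
  have eq: "I (N + N) = I N"
  proof (rule subspace_dim_equal)
    show "subspace (I (N + N))" "subspace (I N)" by (rule sI)+
    show "I (N + N) \<subseteq> I N" by (rule mono)
    show "dim (I N) \<le> dim (I (N + N))" using dle[of "N + N"] N by simp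
  qed
  have "(br x ^^ N) y \<in> I N" unfolding I_def by simp
  then have "(br x ^^ N) y \<in> I (N + N)" using eq by simp
  then obtain u where u: "(br x ^^ N) y = (br x ^^ (N + N)) u" unfolding I_def by auto
  define a where "a = (br x ^^ N) u"
  have aX: "a \<in> X" unfolding a_def using pow_ideal[OF X x N(1)] .
  have "(br x ^^ N) (y - a) = 0" unfolding pow_diff u a_def pow_plus by simp
  then have "y - a \<in> L0 x" unfolding L0_def by blast
  then show ?thesis using aX by blast
qed

lemma engel:
  assumes "lie_subalgebra sc br K" "subspace V" "subspace U" "U \<subseteq> V" "U \<noteq> V"
    "\<forall>k\<in>K. \<forall>v\<in>V. br k v \<in> V" "\<forall>k\<in>K. \<forall>u\<in>U. br k u \<in> U"
    "\<forall>k\<in>K. \<forall>v. \<exists>n. (br k ^^ n) v = 0"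
  shows "\<exists>v\<in>V. v \<notin> U \<and> (\<forall>k\<in>K. br k v \<in> U)"
  using assms
proof (induction "dim K" arbitrary: K V U rule: less_induct)
  case less
  note sK = subalg_sub[OF less.prems(1)]
  show ?case
  proof (cases "K \<subseteq> {0}")
    case True
    obtain v where v: "v \<in> V" "v \<notin> U" using less.prems(4,5) by blast
    have "\<forall>k\<in>K. br k v \<in> U" using True subspace_0[OF less.prems(3)] by auto
    then show ?thesis using v by blast
  next
    case False
    define R where "R H \<longleftrightarrow> lie_subalgebra sc br H \<and> H \<subseteq> K \<and> H \<noteq> K" for H
    have "R {0}" unfolding R_def lie_subalgebra_def using False subspace_0[OF sK] by auto
    then obtain H where RH: "R H" and Hmax: "\<forall>S. R S \<and> H \<subseteq> S \<longrightarrow> S = H"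
      using greatest[of R "{0}"] unfolding R_def by (blast dest: subalg_sub)
    have subH: "lie_subalgebra sc br H" "H \<subseteq> K" "H \<noteq> K" using RH unfolding R_def by auto
    note sH = subalg_sub[OF subH(1)]
    have e1: "span H = H" "span K = K" using sH sK by (simp_all add: span_eq_iff)
    have "span H \<subset> span K" unfolding e1 using subH by auto
    then have dimH: "dim H < dim K" by (rule dim_psubset)
    have nilH: "\<forall>k\<in>H. \<forall>v. \<exists>n. (br k ^^ n) v = 0" using less.prems(8) subH(2) by blast
    have "\<exists>v\<in>K. v \<notin> H \<and> (\<forall>k\<in>H. br k v \<in> H)"
    proof (rule less.hyps[OF dimH])
      show "lie_subalgebra sc br H" "subspace K" "subspace H" "H \<subseteq> K" "H \<noteq> K"
        using subH sH sK by auto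
      show "\<forall>k\<in>H. \<forall>v\<in>K. br k v \<in> K" using subH(2) less.prems(1) subalg_br by blast
      show "\<forall>k\<in>H. \<forall>u\<in>H. br k u \<in> H" using subH(1) subalg_br by blast
      show "\<forall>k\<in>H. \<forall>v. \<exists>n. (br k ^^ n) v = 0" by (rule nilH)
    qed
    then obtain y where y: "y \<in> K" "y \<notin> H" "\<forall>h\<in>H. br h y \<in> H" by blast
    define H' where "H' = {h + sc c y | h c. h \<in> H}"
    have memH': "z \<in> H' \<longleftrightarrow> (\<exists>h c. h \<in> H \<and> z = h + sc c y)" for z unfolding H'_def by blast
    have brH: "br h y \<in> H" "br y h \<in> H" if "h \<in> H" for h
    proof -
      show "br h y \<in> H" using y(3) that by blast
      have "br y h = - br h y" by (rule anti)
      then show "br y h \<in> H" using y(3) that subspace_neg[OF sH] by simp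
    qed
    have subH': "lie_subalgebra sc br H'"
      unfolding lie_subalgebra_def
    proof (intro conjI ballI)
      show "subspace H'"
      proof (rule subspaceI)
        show "0 \<in> H'" unfolding memH' using subspace_0[OF sH] by (intro exI[of _ 0] exI[of _ 0]) simp
      next
        fix u v assume "u \<in> H'" "v \<in> H'"
        then obtain h c h' c' where "h \<in> H" "u = h + sc c y" "h' \<in> H" "v = h' + sc c' y"
          unfolding memH' by blast
        moreover have "h + h' \<in> H" using calculation subspace_add[OF sH] by blast
        moreover have "u + v = (h + h') + sc (c + c') y" using calculation
          by (simp add: scale_left_distrib add_ac)
        ultimately show "u + v \<in> H'" unfolding memH' by blast
      next
        fix c u assume "u \<in> H'"
        then obtain h c' where "h \<in> H" "u = h + sc c' y" unfolding memH' by blast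
        moreover have "sc c h \<in> H" using calculation subspace_scale[OF sH] by blast
        moreover have "sc c u = sc c h + sc (c * c') y" using calculation
          by (simp add: scale_right_distrib)
        ultimately show "sc c u \<in> H'" unfolding memH' by blast
      qed
    next
      fix u v assume "u \<in> H'" "v \<in> H'"
      then obtain h c h' c' where hh: "h \<in> H" "u = h + sc c y" "h' \<in> H" "v = h' + sc c' y"
        unfolding memH' by blast
      have e: "br u v = br h h' + sc c' (br h y) + sc c (br y h')"
        using hh by (simp add: addL addR scL scR alt add_ac)
      have "br h h' \<in> H" using hh subH(1) subalg_br by blast
      moreover have "sc c' (br h y) \<in> H" using brH hh subspace_scale[OF sH] by blast
      moreover have "sc c (br y h') \<in> H" using brH hh subspace_scale[OF sH] by blast
      ultimately have "br u v \<in> H" unfolding e using subspace_add[OF sH] by blast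
      then have "br u v + sc 0 y \<in> H'" unfolding memH' by blast
      then show "br u v \<in> H'" by simp
    qed
    have HH': "H \<subseteq> H'"
    proof
      fix h assume "h \<in> H"
      moreover have "h = h + sc 0 y" by simp
      ultimately show "h \<in> H'" unfolding memH' by blast
    qed
    have H'K: "H' \<subseteq> K"
    proof
      fix z assume "z \<in> H'"
      then obtain h c where "h \<in> H" "z = h + sc c y" unfolding memH' by blast
      then show "z \<in> K" using subH(2) y(1) subspace_add[OF sK] subspace_scale[OF sK] by blast
    qed
    have "y \<in> H'" unfolding memH' using subspace_0[OF sH] by (intro exI[of _ 0] exI[of _ 1]) simp
    then have "H' \<noteq> H" using y(2) by blast
    then have H'eq: "H' = K" using Hmax subH' HH' H'K unfolding R_def by blast
    define W where "W = {v \<in> V. \<forall>h\<in>H. br h v \<in> U}"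
    have "\<exists>v\<in>V. v \<notin> U \<and> (\<forall>k\<in>H. br k v \<in> U)"
    proof (rule less.hyps[OF dimH])
      show "lie_subalgebra sc br H" by (rule subH(1))
      show "subspace V" "subspace U" "U \<subseteq> V" "U \<noteq> V" using less.prems by auto
      show "\<forall>k\<in>H. \<forall>v\<in>V. br k v \<in> V" "\<forall>k\<in>H. \<forall>u\<in>U. br k u \<in> U"
        using less.prems(6,7) subH(2) by blast+
      show "\<forall>k\<in>H. \<forall>v. \<exists>n. (br k ^^ n) v = 0" by (rule nilH)
    qed
    then obtain w0 where w0: "w0 \<in> W" "w0 \<notin> U" unfolding W_def by blast
    have Winv: "br y v \<in> W" if "v \<in> W" for v
    proof -
      have vV: "v \<in> V" and vU: "\<forall>h\<in>H. br h v \<in> U" using that unfolding W_def by auto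
      have "br y v \<in> V" using less.prems(6) y(1) vV by blast
      moreover have "br h (br y v) \<in> U" if "h \<in> H" for h
      proof -
        have "br h (br y v) = br (br h y) v + br y (br h v)" by (rule jac2)
        moreover have "br (br h y) v \<in> U" using vU y(3) that by blast
        moreover have "br y (br h v) \<in> U" using less.prems(7) y(1) vU that by blast
        ultimately show ?thesis using subspace_add[OF less.prems(3)] by simp
      qed
      ultimately show ?thesis unfolding W_def by blast
    qed
    define w where "w j = (br y ^^ j) w0" for j
    have wW: "w j \<in> W" for j
      by (induction j) (simp_all add: w_def w0(1) Winv[unfolded w_def])
    obtain n where "(br y ^^ n) w0 = 0" using less.prems(8) y(1) by blast
    then have exU: "\<exists>j. w j \<in> U" unfolding w_def using subspace_0[OF less.prems(3)] by metis
    define j where "j = (LEAST j. w j \<in> U)"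
    have wj: "w j \<in> U" unfolding j_def by (rule LeastI_ex[OF exU])
    have "j \<noteq> 0"
    proof
      assume "j = 0"
      then show False using wj w0(2) unfolding w_def by simp
    qed
    then obtain i where ji: "j = Suc i" by (cases j) auto
    have wi: "w i \<notin> U" using not_less_Least[of i "\<lambda>j. w j \<in> U"] ji unfolding j_def by simp
    have wij: "br y (w i) \<in> U" using wj ji unfolding w_def by simp
    have wiW: "w i \<in> W" by (rule wW)
    have "\<forall>k\<in>K. br k (w i) \<in> U"
    proof
      fix k assume "k \<in> K"
      then have "k \<in> H'" using H'eq by simp
      then obtain h c where hc: "h \<in> H" "k = h + sc c y" unfolding memH' by blast
      have "br k (w i) = br h (w i) + sc c (br y (w i))" using hc by (simp add: addL scL)
      moreover have "br h (w i) \<in> U" using wiW hc(1) unfolding W_def by blast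
      moreover have "sc c (br y (w i)) \<in> U" using wij subspace_scale[OF less.prems(3)] by blast
      ultimately show "br k (w i) \<in> U" using subspace_add[OF less.prems(3)] by simp
    qed
    moreover have "w i \<in> V" using wiW unfolding W_def by blast
    ultimately show ?thesis using wi by blast
  qed
qed

lemma Q_abelian:
  assumes pr: "pairOK X Y" and q: "QQ X Y"
  shows "\<forall>a\<in>X. \<forall>b\<in>X. br a b = 0"
proof -
  note f = pr_facts[OF pr]
  have nil: "\<forall>k\<in>X. \<forall>v. \<exists>n. (br k ^^ n) v = 0"
  proof (intro ballI allI)
    fix k v assume k: "k \<in> X"
    have "L0 k = UNIV"
    proof (rule ccontr)
      assume "L0 k \<noteq> UNIV"
      then obtain M where M: "maxsub M" "L0 k \<subseteq> M" using ex_maxsub L0_subalg by blast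
      have "Y \<subseteq> L0 k"
      proof
        fix b assume "b \<in> Y"
        then have "(br k ^^ 1) b = 0" using comm0[OF pr k] by simp
        then show "b \<in> L0 k" unfolding L0_def by blast
      qed
      then have XM: "X \<subseteq> M" using q M unfolding QQ_def by blast
      have "y \<in> M" for y
      proof -
        obtain a where a: "a \<in> X" "y - a \<in> L0 k" using fitting[OF f(1) k] by blast
        then have "(y - a) + a \<in> M" using M XM subspace_add[OF maxsub_D(2)[OF M(1)]] by blast
        then show ?thesis by simp
      qed
      then show False using maxsub_D(3)[OF M(1)] by blast
    qed
    then show "\<exists>n. (br k ^^ n) v = 0" unfolding L0_def by blast
  qed
  obtain v where v: "v \<in> X" "v \<notin> {0}" "\<forall>k\<in>X. br k v \<in> {0}"
  proof -
    have "\<exists>v\<in>X. v \<notin> {0} \<and> (\<forall>k\<in>X. br k v \<in> {0})"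
    proof (rule engel)
      show "lie_subalgebra sc br X" using ideal_subalg[OF f(1)] .
      show "subspace X" "subspace {0}" "{0} \<subseteq> X" "{0} \<noteq> X" using f by auto
      show "\<forall>k\<in>X. \<forall>v\<in>X. br k v \<in> X" using ideal_br[OF f(1)] by blast
      show "\<forall>k\<in>X. \<forall>u\<in>{0}. br k u \<in> {0}" by simp
      show "\<forall>k\<in>X. \<forall>v. \<exists>n. (br k ^^ n) v = 0" by (rule nil)
    qed
    then show ?thesis using that by blast
  qed
  define Z where "Z = {z \<in> X. \<forall>k\<in>X. br k z = 0}"
  have iZ: "lie_ideal sc br Z"
    unfolding lie_ideal_def
  proof (intro conjI allI ballI)
    show "subspace Z"
    proof (rule subspaceI)
      show "0 \<in> Z" unfolding Z_def using f by simp
    next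
      fix u w assume "u \<in> Z" "w \<in> Z"
      then show "u + w \<in> Z" unfolding Z_def using subspace_add[OF f(3)] by (simp add: addR)
    next
      fix c u assume "u \<in> Z"
      then show "sc c u \<in> Z" unfolding Z_def using subspace_scale[OF f(3)] by (simp add: scR)
    qed
  next
    fix w z assume z: "z \<in> Z"
    have "br w z \<in> X" using z ideal_br[OF f(1)] unfolding Z_def by blast
    moreover have "br k (br w z) = 0" if "k \<in> X" for k
    proof -
      have "br k (br w z) = br (br k w) z + br w (br k z)" by (rule jac2)
      moreover have "br k w \<in> X" using ideal_brL[OF f(1) that] .
      ultimately show ?thesis using z that unfolding Z_def by simp
    qed
    ultimately show "br w z \<in> Z" unfolding Z_def by blast
  qed
  have "v \<in> Z" using v unfolding Z_def by simp
  then have "Z \<noteq> {0}" using v(2) by blast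
  then have "Z = X" using minimal_eq[OF _ iZ _] pr unfolding pairOK_def Z_def by blast
  then show ?thesis unfolding Z_def by blast
qed

lemma inter_zero:
  assumes mX: "minimal_ideal sc br X" and M: "maxsub M" and YM: "set_plus_v Y M = UNIV" and nX: "\<not> X \<subseteq> M"
    and comm: "\<And>a b. a \<in> Y \<Longrightarrow> b \<in> X \<Longrightarrow> br a b = 0"
  shows "X \<inter> M = {0}"
proof (rule ccontr)
  assume ne: "X \<inter> M \<noteq> {0}"
  have f1: "lie_ideal sc br X" using mX unfolding minimal_ideal_def by blast
  have f: "lie_ideal sc br X" "subspace X" using f1 ideal_sub by auto
  have "lie_ideal sc br (X \<inter> M)"
    unfolding lie_ideal_def
  proof (intro conjI allI ballI)
    show "subspace (X \<inter> M)" using f maxsub_D(2)[OF M] by (simp add: subspace_inter)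
    fix z u assume u: "u \<in> X \<inter> M"
    have "z \<in> set_plus_v Y M" using YM by simp
    then obtain b m where bm: "b \<in> Y" "m \<in> M" "z = b + m" by (auto simp: spv)
    have "br z u = br b u + br m u" using bm by (simp add: addL)
    moreover have "br b u = 0" using comm bm u by blast
    moreover have "br m u \<in> X" using ideal_br[OF f(1)] u by blast
    moreover have "br m u \<in> M" using subalg_br[OF maxsub_D(1)[OF M]] bm u by blast
    ultimately show "br z u \<in> X \<inter> M" by simp
  qed
  then have "X \<inter> M = X" using minimal_eq[OF mX _ _ ne] by blast
  then show False using nX by blast
qed

lemma lemB:
  assumes pr: "pairOK X Y" and q: "QQ X Y" and np: "\<not> PP X"
  shows "\<not> PP Y \<and> QQ Y X \<and> (\<forall>a\<in>X. \<forall>b\<in>X. br a b = 0) \<and> (\<forall>a\<in>Y. \<forall>b\<in>Y. br a b = 0)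
     \<and> (\<exists>M. maxsub M \<and> X \<inter> M = {0} \<and> Y \<inter> M = {0} \<and> set_plus_v X M = UNIV \<and> set_plus_v Y M = UNIV)"
proof -
  note f = pr_facts[OF pr]
  obtain M where M: "maxsub M" and nXM: "\<not> X \<subseteq> M" using np unfolding PP_def by blast
  have nYM: "\<not> Y \<subseteq> M" using q M nXM unfolding QQ_def by blast
  have XMU: "set_plus_v X M = UNIV" using maxsub_sum[OF M f(1) nXM] .
  have YMU: "set_plus_v Y M = UNIV" using maxsub_sum[OF M f(2) nYM] .
  note sM = maxsub_D(2)[OF M] and subM = maxsub_D(1)[OF M]
  have XM0: "X \<inter> M = {0}"
    using inter_zero[OF _ M YMU nXM] comm0'[OF pr] pr unfolding pairOK_def by blast
  have YM0: "Y \<inter> M = {0}"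
    using inter_zero[OF _ M XMU nYM] comm0[OF pr] pr unfolding pairOK_def by blast
  have abX: "\<forall>a\<in>X. \<forall>b\<in>X. br a b = 0" using Q_abelian[OF pr q] .
  have abY: "\<forall>b\<in>Y. \<forall>b'\<in>Y. br b b' = 0"
  proof (intro ballI)
    fix b b' assume b: "b \<in> Y" and b': "b' \<in> Y"
    have "b \<in> set_plus_v X M" "b' \<in> set_plus_v X M" using XMU by auto
    then obtain a m a' m' where am: "a \<in> X" "m \<in> M" "b = a + m" and am': "a' \<in> X" "m' \<in> M" "b' = a' + m'"
      by (auto simp: spv)
    have "br b a' = 0" using comm0'[OF pr am'(1) b] .
    have "br a b' = 0" using comm0[OF pr am(1) b'] .
    then have "br a a' + br a m' = 0" using am' by (simp add: addR)
    then have am'0: "br a m' = 0" using abX am am' by simp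
    have "br b b' = br b a' + br b m'" using am' by (simp add: addR)
    also have "\<dots> = br b m'" using \<open>br b a' = 0\<close> by simp
    also have "\<dots> = br a m' + br m m'" using am by (simp add: addL)
    also have "\<dots> = br m m'" using am'0 by simp
    finally have e: "br b b' = br m m'" .
    have "br m m' \<in> M" using subalg_br[OF subM am(2) am'(2)] .
    moreover have "br b b' \<in> Y" using ideal_br[OF f(2) b'] .
    ultimately show "br b b' = 0" using YM0 e by auto
  qed
  have Q2: "QQ Y X"
    unfolding QQ_def
  proof (intro allI impI)
    fix M' assume M': "maxsub M' \<and> X \<subseteq> M'"
    show "Y \<subseteq> M'"
    proof (rule ccontr)
      assume nY: "\<not> Y \<subseteq> M'"
      note sM' = maxsub_D(2)[OF M'[THEN conjunct1]] and subM' = maxsub_D(1)[OF M'[THEN conjunct1]]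
      have YM'U: "set_plus_v Y M' = UNIV" using maxsub_sum[OF M'[THEN conjunct1] f(2) nY] .
      have YM'0: "Y \<inter> M' = {0}"
        using inter_zero[OF _ M'[THEN conjunct1] YM'U nY] abY pr unfolding pairOK_def by blast
      define N where "N = set_plus_v Y (M \<inter> M')"
      have subN: "lie_subalgebra sc br N" unfolding N_def
        using subalg_sum[OF f(2) subalg_inter[OF subM subM']] .
      obtain a0 where a0: "a0 \<in> X" "a0 \<noteq> 0" using f(5) f(7) by blast
      have NU: "N \<noteq> UNIV"
      proof
        assume "N = UNIV"
        then have "a0 \<in> N" by simp
        then obtain b c where bc: "b \<in> Y" "c \<in> M \<inter> M'" "a0 = b + c" unfolding N_def by (auto simp: spv)
        have bb: "b = a0 - c" using bc by simp
        have "a0 \<in> M'" using a0 M' by blast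
        then have "a0 - c \<in> M'" using subspace_diff[OF sM'] bc by blast
        then have "b \<in> M'" using bb by simp
        then have "b = 0" using YM'0 bc by blast
        then have "a0 \<in> X \<inter> M" using bc a0 by simp
        then show False using XM0 a0 by blast
      qed
      obtain M'' where M'': "maxsub M''" "N \<subseteq> M''" using ex_maxsub[OF subN NU] by blast
      have "0 \<in> M \<inter> M'" using subspace_0[OF sM] subspace_0[OF sM'] by blast
      then have "Y \<subseteq> N" unfolding N_def by (force simp: spv)
      then have XM'': "X \<subseteq> M''" using q M'' unfolding QQ_def by blast
      note sM'' = maxsub_D(2)[OF M''(1)]
      have "y \<in> M''" for y
      proof -
        have "y \<in> set_plus_v Y M'" using YM'U by simp
        then obtain b m' where bm: "b \<in> Y" "m' \<in> M'" "y = b + m'" by (auto simp: spv)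
        have "m' \<in> set_plus_v X M" using XMU by simp
        then obtain a m where am: "a \<in> X" "m \<in> M" "m' = a + m" by (auto simp: spv)
        have "m = m' - a" using am by simp
        then have "m \<in> M'" using subspace_diff[OF sM'] bm am M' by blast
        then have "b + m \<in> N" unfolding N_def using bm am by (auto simp: spv)
        then have "b + m \<in> M''" using M'' by blast
        moreover have "a \<in> M''" using XM'' am by blast
        ultimately have "(b + m) + a \<in> M''" using subspace_add[OF sM''] by blast
        moreover have "(b + m) + a = y" using bm am by (simp add: add_ac)
        ultimately show ?thesis by simp
      qed
      then show False using maxsub_D(3)[OF M''(1)] by blast
    qed
  qed
  have "\<not> PP Y" using M nYM unfolding PP_def by blast
  then show ?thesis using Q2 abX abY M XM0 YM0 XMU YMU by blast
qed

definition prj where "prj S T z = (SOME b. b \<in> T \<and> z - b \<in> S)"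

lemma prj_eq:
  assumes "subspace S" "subspace T" "S \<inter> T = {0}" "a \<in> S" "b \<in> T"
  shows "prj S T (a + b) = b"
proof -
  let ?P = "\<lambda>b'. b' \<in> T \<and> (a + b) - b' \<in> S"
  have Pb: "?P b" using assms by simp
  have uniq: "b' = b" if "?P b'" for b'
  proof -
    have "((a + b) - b') - a \<in> S" using that assms subspace_diff[OF assms(1)] by blast
    moreover have "((a + b) - b') - a = b - b'" by (simp add: algebra_simps)
    ultimately have "b - b' \<in> S" by simp
    moreover have "b - b' \<in> T" using that assms subspace_diff[OF assms(2)] by blast
    ultimately have "b - b' = 0" using assms(3) by blast
    then show ?thesis by simp
  qed
  have "?P (prj S T (a + b))" unfolding prj_def by (rule someI[of ?P b]) (rule Pb)
  then show ?thesis using uniq by blast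
qed

lemma iso1:
  assumes pr: "pairOK X Y"
  shows "factor_iso sc br (X, {0}) (set_plus_v X Y, Y)"
proof -
  note f = pr_facts[OF pr]
  have c1: "\<forall>x\<in>X. x \<in> set_plus_v X Y"
  proof
    fix x assume "x \<in> X"
    moreover have "x = x + 0" by simp
    ultimately show "x \<in> set_plus_v X Y" unfolding spv using f by blast
  qed
  have c5: "\<forall>x\<in>X. x \<in> Y \<longrightarrow> x \<in> {0}" using inter0[OF pr] by blast
  have c6: "\<forall>y\<in>set_plus_v X Y. \<exists>x\<in>X. y - x \<in> Y"
  proof
    fix y assume "y \<in> set_plus_v X Y"
    then obtain a b where "a \<in> X" "b \<in> Y" "y = a + b" by (auto simp: spv)
    then show "\<exists>x\<in>X. y - x \<in> Y" by (intro bexI[of _ a]) simp_all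
  qed
  show ?thesis unfolding factor_iso_def prod.case
    by (rule exI[of _ "\<lambda>x. x"]) (use c1 c5 c6 f in auto)
qed

lemma iso2:
  assumes pr: "pairOK X Y"
  shows "factor_iso sc br (set_plus_v X Y, X) (Y, {0})"
proof -
  note f = pr_facts[OF pr]
  note P = prj_eq[OF f(3) f(4) inter0[OF pr]]
  let ?g = "prj X Y"
  have c1: "\<forall>x\<in>set_plus_v X Y. ?g x \<in> Y" by (auto simp: spv P)
  have c2: "\<forall>x\<in>set_plus_v X Y. \<forall>y\<in>set_plus_v X Y. ?g (x + y) = ?g x + ?g y"
  proof (intro ballI)
    fix x y assume "x \<in> set_plus_v X Y" "y \<in> set_plus_v X Y"
    then obtain a b a' b' where ab: "a \<in> X" "b \<in> Y" "x = a + b" "a' \<in> X" "b' \<in> Y" "y = a' + b'"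
      by (auto simp: spv)
    have e: "x + y = (a + a') + (b + b')" using ab by (simp add: add_ac)
    have m: "a + a' \<in> X" "b + b' \<in> Y" using ab subspace_add f(3,4) by auto
    have "?g (x + y) = b + b'" unfolding e using P[OF m] .
    then show "?g (x + y) = ?g x + ?g y" using ab P by simp
  qed
  have c3: "\<forall>c. \<forall>x\<in>set_plus_v X Y. ?g (sc c x) = sc c (?g x)"
  proof (intro allI ballI)
    fix c x assume "x \<in> set_plus_v X Y"
    then obtain a b where ab: "a \<in> X" "b \<in> Y" "x = a + b" by (auto simp: spv)
    have e: "sc c x = sc c a + sc c b" using ab by (simp add: scale_right_distrib)
    have m: "sc c a \<in> X" "sc c b \<in> Y" using ab subspace_scale f(3,4) by auto
    have "?g (sc c x) = sc c b" unfolding e using P[OF m] .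
    then show "?g (sc c x) = sc c (?g x)" using ab P by simp
  qed
  have c4: "\<forall>x\<in>X. ?g x \<in> {0}"
  proof
    fix x assume "x \<in> X"
    then have "?g (x + 0) = 0" using P f by blast
    then show "?g x \<in> {0}" by simp
  qed
  have c5: "\<forall>x\<in>set_plus_v X Y. ?g x \<in> {0} \<longrightarrow> x \<in> X"
  proof (intro ballI impI)
    fix x assume "x \<in> set_plus_v X Y" "?g x \<in> {0}"
    then obtain a b where ab: "a \<in> X" "b \<in> Y" "x = a + b" by (auto simp: spv)
    then have "b = 0" using P \<open>?g x \<in> {0}\<close> by simp
    then show "x \<in> X" using ab by simp
  qed
  have c6: "\<forall>y\<in>Y. \<exists>x\<in>set_plus_v X Y. y - ?g x \<in> {0}"
  proof
    fix y assume y: "y \<in> Y"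
    have "0 + y \<in> set_plus_v X Y" using y f unfolding spv by blast
    moreover have "?g (0 + y) = y" using P f y by blast
    ultimately show "\<exists>x\<in>set_plus_v X Y. y - ?g x \<in> {0}" by force
  qed
  have c7: "\<forall>z. \<forall>x\<in>set_plus_v X Y. ?g (br z x) - br z (?g x) \<in> {0}"
  proof (intro allI ballI)
    fix z x assume "x \<in> set_plus_v X Y"
    then obtain a b where ab: "a \<in> X" "b \<in> Y" "x = a + b" by (auto simp: spv)
    have e: "br z x = br z a + br z b" using ab by (simp add: addR)
    have m: "br z a \<in> X" "br z b \<in> Y" using ab ideal_br f(1,2) by auto
    have "?g (br z x) = br z b" unfolding e using P[OF m] .
    then show "?g (br z x) - br z (?g x) \<in> {0}" using ab P by simp
  qed
  show ?thesis unfolding factor_iso_def prod.case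
    by (rule exI[of _ ?g]) (use c1 c2 c3 c4 c5 c6 c7 in blast)
qed

lemma iso3:
  assumes pr: "pairOK X Y" and abY: "\<forall>a\<in>Y. \<forall>b\<in>Y. br a b = 0"
    and subM: "lie_subalgebra sc br M" and XM0: "X \<inter> M = {0}" and YM0: "Y \<inter> M = {0}"
    and XMU: "set_plus_v X M = UNIV" and YMU: "set_plus_v Y M = UNIV"
  shows "factor_iso sc br (X, {0}) (Y, {0})"
proof -
  note f = pr_facts[OF pr]
  note sM = subalg_sub[OF subM]
  have MY0: "M \<inter> Y = {0}" using YM0 by blast
  note P = prj_eq[OF sM f(4) MY0]
  let ?g = "prj M Y"
  have dec: "\<exists>m b. m \<in> M \<and> b \<in> Y \<and> x = m + b" for x
  proof -
    have "x \<in> set_plus_v Y M" using YMU by simp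
    then obtain b m where "b \<in> Y" "m \<in> M" "x = b + m" by (auto simp: spv)
    then show ?thesis by (metis add.commute)
  qed
  have c1: "\<forall>x\<in>X. ?g x \<in> Y"
  proof
    fix x
    obtain m b where mb: "m \<in> M" "b \<in> Y" "x = m + b" using dec by blast
    then show "?g x \<in> Y" using P by simp
  qed
  have c2: "\<forall>x\<in>X. \<forall>y\<in>X. ?g (x + y) = ?g x + ?g y"
  proof (intro ballI)
    fix x y
    obtain a b a' b' where ab: "a \<in> M" "b \<in> Y" "x = a + b" "a' \<in> M" "b' \<in> Y" "y = a' + b'"
      using dec by blast
    have e: "x + y = (a + a') + (b + b')" using ab by (simp add: add_ac)
    have m: "a + a' \<in> M" "b + b' \<in> Y" using ab subspace_add sM f(4) by auto
    have "?g (x + y) = b + b'" unfolding e using P[OF m] .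
    then show "?g (x + y) = ?g x + ?g y" using ab P by simp
  qed
  have c3: "\<forall>c. \<forall>x\<in>X. ?g (sc c x) = sc c (?g x)"
  proof (intro allI ballI)
    fix c x
    obtain a b where ab: "a \<in> M" "b \<in> Y" "x = a + b" using dec by blast
    have e: "sc c x = sc c a + sc c b" using ab by (simp add: scale_right_distrib)
    have m: "sc c a \<in> M" "sc c b \<in> Y" using ab subspace_scale sM f(4) by auto
    have "?g (sc c x) = sc c b" unfolding e using P[OF m] .
    then show "?g (sc c x) = sc c (?g x)" using ab P by simp
  qed
  have c4: "\<forall>x\<in>{0}. ?g x \<in> {0}"
  proof -
    have "?g (0 + 0) = 0" using P subspace_0[OF sM] f by blast
    then show ?thesis by simp
  qed
  have c5: "\<forall>x\<in>X. ?g x \<in> {0} \<longrightarrow> x \<in> {0}"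
  proof (intro ballI impI)
    fix x assume x: "x \<in> X" "?g x \<in> {0}"
    obtain a b where ab: "a \<in> M" "b \<in> Y" "x = a + b" using dec by blast
    then have "b = 0" using P x(2) by simp
    then have "x \<in> X \<inter> M" using ab x by simp
    then show "x \<in> {0}" using XM0 by simp
  qed
  have c6: "\<forall>y\<in>Y. \<exists>x\<in>X. y - ?g x \<in> {0}"
  proof
    fix y assume y: "y \<in> Y"
    have "y \<in> set_plus_v X M" using XMU by simp
    then obtain a m where am: "a \<in> X" "m \<in> M" "y = a + m" by (auto simp: spv)
    have ea: "a = (- m) + y" using am by (simp add: algebra_simps)
    have mm: "- m \<in> M" using am subspace_neg[OF sM] by blast
    have "?g a = y" unfolding ea using P[OF mm y] .
    then show "\<exists>x\<in>X. y - ?g x \<in> {0}" using am by force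
  qed
  have c7: "\<forall>z. \<forall>x\<in>X. ?g (br z x) - br z (?g x) \<in> {0}"
  proof (intro allI ballI)
    fix z x assume x: "x \<in> X"
    obtain m b where mb: "m \<in> M" "b \<in> Y" "x = m + b" using dec by blast
    obtain m' b' where mb': "m' \<in> M" "b' \<in> Y" "z = m' + b'" using dec by blast
    have gx: "?g x = b" using P mb by simp
    have "br b' x = 0" using comm0'[OF pr x mb'(2)] .
    then have "br z x = br m' x" using mb' by (simp add: addL)
    also have "\<dots> = br m' m + br m' b" using mb by (simp add: addR)
    finally have e1: "br z x = br m' m + br m' b" .
    have "br m' m \<in> M" using subalg_br[OF subM mb'(1) mb(1)] .
    moreover have "br m' b \<in> Y" using ideal_br[OF f(2) mb(2)] .
    ultimately have g1: "?g (br z x) = br m' b" unfolding e1 using P by simp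
    have "br z b = br m' b + br b' b" using mb' by (simp add: addL)
    also have "\<dots> = br m' b" using abY mb mb' by simp
    finally show "?g (br z x) - br z (?g x) \<in> {0}" using g1 gx by simp
  qed
  show ?thesis unfolding factor_iso_def prod.case
    by (rule exI[of _ ?g]) (use c1 c2 c3 c4 c5 c6 c7 in blast)
qed

lemma iso4:
  assumes pr: "pairOK X Y" and g: "factor_iso sc br (Y, {0}) (X, {0})"
  shows "factor_iso sc br (set_plus_v X Y, X) (set_plus_v X Y, Y)"
proof -
  note f = pr_facts[OF pr]
  note P = prj_eq[OF f(3) f(4) inter0[OF pr]]
  obtain g where g1: "\<forall>x\<in>Y. g x \<in> X" and g2: "\<forall>x\<in>Y. \<forall>y\<in>Y. g (x + y) = g x + g y"
    and g3: "\<forall>c. \<forall>x\<in>Y. g (sc c x) = sc c (g x)" and g4: "\<forall>x\<in>{0}. g x \<in> {0}"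
    and g5: "\<forall>x\<in>Y. g x \<in> {0} \<longrightarrow> x \<in> {0}" and g6: "\<forall>y\<in>X. \<exists>x\<in>Y. y - g x \<in> {0}"
    and g7: "\<forall>z. \<forall>x\<in>Y. g (br z x) - br z (g x) \<in> {0}"
    using g unfolding factor_iso_def prod.case by (elim exE conjE) blast
  let ?h = "\<lambda>x. g (prj X Y x)"
  have dec: "x \<in> set_plus_v X Y \<Longrightarrow> \<exists>a b. a \<in> X \<and> b \<in> Y \<and> x = a + b" for x by (auto simp: spv)
  have XS: "a \<in> X \<Longrightarrow> a \<in> set_plus_v X Y" for a
  proof -
    assume "a \<in> X" moreover have "a = a + 0" by simp
    ultimately show ?thesis unfolding spv using f by blast
  qed
  have c1: "\<forall>x\<in>set_plus_v X Y. ?h x \<in> set_plus_v X Y"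
  proof
    fix x assume "x \<in> set_plus_v X Y"
    then obtain a b where ab: "a \<in> X" "b \<in> Y" "x = a + b" using dec by blast
    then have "?h x = g b" using P by simp
    then show "?h x \<in> set_plus_v X Y" using g1 ab XS by simp
  qed
  have c2: "\<forall>x\<in>set_plus_v X Y. \<forall>y\<in>set_plus_v X Y. ?h (x + y) = ?h x + ?h y"
  proof (intro ballI)
    fix x y assume "x \<in> set_plus_v X Y" "y \<in> set_plus_v X Y"
    then obtain a b a' b' where ab: "a \<in> X" "b \<in> Y" "x = a + b" "a' \<in> X" "b' \<in> Y" "y = a' + b'"
      using dec by blast
    have e: "x + y = (a + a') + (b + b')" using ab by (simp add: add_ac)
    have m: "a + a' \<in> X" "b + b' \<in> Y" using ab subspace_add f(3,4) by auto
    have "?h (x + y) = g (b + b')" unfolding e using P[OF m] by simp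
    then show "?h (x + y) = ?h x + ?h y" using ab P g2 by simp
  qed
  have c3: "\<forall>c. \<forall>x\<in>set_plus_v X Y. ?h (sc c x) = sc c (?h x)"
  proof (intro allI ballI)
    fix c x assume "x \<in> set_plus_v X Y"
    then obtain a b where ab: "a \<in> X" "b \<in> Y" "x = a + b" using dec by blast
    have e: "sc c x = sc c a + sc c b" using ab by (simp add: scale_right_distrib)
    have m: "sc c a \<in> X" "sc c b \<in> Y" using ab subspace_scale f(3,4) by auto
    have "?h (sc c x) = g (sc c b)" unfolding e using P[OF m] by simp
    then show "?h (sc c x) = sc c (?h x)" using ab P g3 by simp
  qed
  have g0: "g 0 = 0" using g4 by simp
  have c4: "\<forall>x\<in>X. ?h x \<in> Y"
  proof
    fix x assume "x \<in> X"
    then have "prj X Y (x + 0) = 0" using P f by blast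
    then show "?h x \<in> Y" using g0 f by simp
  qed
  have c5: "\<forall>x\<in>set_plus_v X Y. ?h x \<in> Y \<longrightarrow> x \<in> X"
  proof (intro ballI impI)
    fix x assume x: "x \<in> set_plus_v X Y" "?h x \<in> Y"
    then obtain a b where ab: "a \<in> X" "b \<in> Y" "x = a + b" using dec by blast
    then have "g b \<in> Y" using P x(2) by simp
    moreover have "g b \<in> X" using g1 ab by blast
    ultimately have "g b = 0" using inter0[OF pr] by blast
    then have "b = 0" using g5 ab by simp
    then show "x \<in> X" using ab by simp
  qed
  have c6: "\<forall>y\<in>set_plus_v X Y. \<exists>x\<in>set_plus_v X Y. y - ?h x \<in> Y"
  proof
    fix y assume "y \<in> set_plus_v X Y"
    then obtain a' b' where ab: "a' \<in> X" "b' \<in> Y" "y = a' + b'" using dec by blast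
    obtain b where b: "b \<in> Y" "a' - g b \<in> {0}" using g6 ab by blast
    have gb: "g b = a'" using b by simp
    have "0 + b \<in> set_plus_v X Y" using b f unfolding spv by blast
    moreover have "?h (0 + b) = a'" using P[OF f(7) b(1)] gb by simp
    moreover have "y - a' = b'" using ab by simp
    ultimately have "y - ?h (0 + b) \<in> Y" using ab by simp
    then show "\<exists>x\<in>set_plus_v X Y. y - ?h x \<in> Y" using \<open>0 + b \<in> set_plus_v X Y\<close> by blast
  qed
  have c7: "\<forall>z. \<forall>x\<in>set_plus_v X Y. ?h (br z x) - br z (?h x) \<in> Y"
  proof (intro allI ballI)
    fix z x assume "x \<in> set_plus_v X Y"
    then obtain a b where ab: "a \<in> X" "b \<in> Y" "x = a + b" using dec by blast
    have e: "br z x = br z a + br z b" using ab by (simp add: addR)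
    have m: "br z a \<in> X" "br z b \<in> Y" using ab ideal_br f(1,2) by auto
    have "?h (br z x) = g (br z b)" unfolding e using P[OF m] by simp
    moreover have "g (br z b) = br z (g b)" using g7 ab by simp
    ultimately show "?h (br z x) - br z (?h x) \<in> Y" using ab P f by simp
  qed
  show ?thesis unfolding factor_iso_def prod.case
    by (rule exI[of _ ?h]) (use c1 c2 c3 c4 c5 c6 c7 in blast)
qed

lemma bij2: "a \<noteq> b \<Longrightarrow> c \<noteq> d \<Longrightarrow> \<theta> a = c \<Longrightarrow> \<theta> b = d \<Longrightarrow> bij_betw \<theta> {a, b} {c, d}"
  unfolding bij_betw_def inj_on_def by auto

lemma main:
  assumes m1: "minimal_ideal sc br A1" and m2: "minimal_ideal sc br A2" and ne: "A1 \<noteq> A2"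
  shows "\<exists>\<theta>. bij_betw \<theta> {(A1, {0}), (set_plus_v A1 A2, A1)} {(A2, {0}), (set_plus_v A1 A2, A2)}
      \<and> (\<forall>p\<in>{(A1, {0}), (set_plus_v A1 A2, A1)}.
           factor_iso sc br p (\<theta> p)
           \<and> (frattini_chief_factor sc br p \<longleftrightarrow> frattini_chief_factor sc br (\<theta> p)))"
proof -
  have pr: "pairOK A1 A2" using m1 m2 ne unfolding pairOK_def by blast
  have pr': "pairOK A2 A1" using pairOK_sym[OF pr] .
  note f = pr_facts[OF pr]
  have F1: "frattini_chief_factor sc br (A1, {0}) \<longleftrightarrow> PP A1" using fr_min[OF m1] .
  have F2: "frattini_chief_factor sc br (A2, {0}) \<longleftrightarrow> PP A2" using fr_min[OF m2] .
  have F3: "frattini_chief_factor sc br (set_plus_v A1 A2, A2) \<longleftrightarrow> QQ A1 A2" using fr_sum1[OF pr] .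
  have F4: "frattini_chief_factor sc br (set_plus_v A1 A2, A1) \<longleftrightarrow> QQ A2 A1" using fr_sum2[OF pr] .
  have PQ1: "PP A1 \<Longrightarrow> QQ A1 A2" unfolding PP_def QQ_def by blast
  have PQ2: "PP A2 \<Longrightarrow> QQ A2 A1" unfolding PP_def QQ_def by blast
  have d1: "(A1, {0}) \<noteq> (set_plus_v A1 A2, A1)" using f(5) by simp
  have d2: "(A2, {0}) \<noteq> (set_plus_v A1 A2, A2)" using f(6) by simp
  let ?D = "{(A1, {0}), (set_plus_v A1 A2, A1)}"
  let ?T = "{(A2, {0}), (set_plus_v A1 A2, A2)}"
  show ?thesis
  proof (cases "(PP A1 \<longleftrightarrow> QQ A1 A2) \<and> (PP A2 \<longleftrightarrow> QQ A2 A1)")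
    case True
    define \<theta> :: "'v set \<times> 'v set \<Rightarrow> 'v set \<times> 'v set" where "\<theta> p = (if p = (A1, {0}) then (set_plus_v A1 A2, A2) else (A2, {0}))" for p
    have t1: "\<theta> (A1, {0}) = (set_plus_v A1 A2, A2)" unfolding \<theta>_def by simp
    have t2: "\<theta> (set_plus_v A1 A2, A1) = (A2, {0})" unfolding \<theta>_def using d1 by auto
    have "bij_betw \<theta> ?D {(set_plus_v A1 A2, A2), (A2, {0})}"
      by (rule bij2) (use d1 d2 t1 t2 in auto)
    then have b: "bij_betw \<theta> ?D ?T" by (simp add: insert_commute)
    have i1: "factor_iso sc br (A1, {0}) (\<theta> (A1, {0}))" using iso1[OF pr] unfolding t1 .
    have i2: "factor_iso sc br (set_plus_v A1 A2, A1) (\<theta> (set_plus_v A1 A2, A1))"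
      using iso2[OF pr] unfolding t2 .
    have r1: "frattini_chief_factor sc br (A1, {0}) \<longleftrightarrow> frattini_chief_factor sc br (\<theta> (A1, {0}))"
      unfolding t1 F1 F3 using True by blast
    have r2: "frattini_chief_factor sc br (set_plus_v A1 A2, A1) \<longleftrightarrow>
        frattini_chief_factor sc br (\<theta> (set_plus_v A1 A2, A1))"
      unfolding t2 F4 F2 using True by blast
    have "\<forall>p\<in>?D. factor_iso sc br p (\<theta> p) \<and>
        (frattini_chief_factor sc br p \<longleftrightarrow> frattini_chief_factor sc br (\<theta> p))"
      using i1 i2 r1 r2 by blast
    then show ?thesis using b by blast
  next
    case False
    have all: "\<not> PP A1 \<and> \<not> PP A2 \<and> QQ A1 A2 \<and> QQ A2 A1 \<and> (\<forall>a\<in>A1. \<forall>b\<in>A1. br a b = 0)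
      \<and> (\<forall>a\<in>A2. \<forall>b\<in>A2. br a b = 0)
      \<and> (\<exists>M. maxsub M \<and> A1 \<inter> M = {0} \<and> A2 \<inter> M = {0} \<and> set_plus_v A1 M = UNIV \<and> set_plus_v A2 M = UNIV)"
    proof (cases "PP A1 \<longleftrightarrow> QQ A1 A2")
      case True
      then have q: "QQ A2 A1" and np: "\<not> PP A2" using False PQ2 by auto
      show ?thesis using lemB[OF pr' q np] q np by blast
    next
      case False
      then have q: "QQ A1 A2" and np: "\<not> PP A1" using PQ1 by auto
      show ?thesis using lemB[OF pr q np] q np by blast
    qed
    then obtain M where M: "maxsub M" "A1 \<inter> M = {0}" "A2 \<inter> M = {0}" "set_plus_v A1 M = UNIV"
      "set_plus_v A2 M = UNIV" by blast
    have ab1: "\<forall>a\<in>A1. \<forall>b\<in>A1. br a b = 0" and ab2: "\<forall>a\<in>A2. \<forall>b\<in>A2. br a b = 0"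
      using all by blast+
    have nP: "\<not> PP A1" "\<not> PP A2" and Q: "QQ A1 A2" "QQ A2 A1" using all by blast+
    note subM = maxsub_D(1)[OF M(1)]
    define \<theta> :: "'v set \<times> 'v set \<Rightarrow> 'v set \<times> 'v set" where "\<theta> p = (if p = (A1, {0}) then (A2, {0}) else (set_plus_v A1 A2, A2))" for p
    have t1: "\<theta> (A1, {0}) = (A2, {0})" unfolding \<theta>_def by simp
    have t2: "\<theta> (set_plus_v A1 A2, A1) = (set_plus_v A1 A2, A2)" unfolding \<theta>_def using d1 by auto
    have b: "bij_betw \<theta> ?D ?T"
      by (rule bij2) (use d1 d2 t1 t2 in auto)
    have i1: "factor_iso sc br (A1, {0}) (\<theta> (A1, {0}))"
      using iso3[OF pr ab2 subM M(2) M(3) M(4) M(5)] unfolding t1 .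
    have g: "factor_iso sc br (A2, {0}) (A1, {0})"
      using iso3[OF pr' ab1 subM M(3) M(2) M(5) M(4)] .
    have i2: "factor_iso sc br (set_plus_v A1 A2, A1) (\<theta> (set_plus_v A1 A2, A1))"
      using iso4[OF pr g] unfolding t2 .
    have r1: "frattini_chief_factor sc br (A1, {0}) \<longleftrightarrow> frattini_chief_factor sc br (\<theta> (A1, {0}))"
      unfolding t1 F1 F2 using nP by blast
    have r2: "frattini_chief_factor sc br (set_plus_v A1 A2, A1) \<longleftrightarrow>
        frattini_chief_factor sc br (\<theta> (set_plus_v A1 A2, A1))"
      unfolding t2 F4 F3 using Q by blast
    have "\<forall>p\<in>?D. factor_iso sc br p (\<theta> p) \<and>
        (frattini_chief_factor sc br p \<longleftrightarrow> frattini_chief_factor sc br (\<theta> p))"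
      using i1 i2 r1 r2 by blast
    then show ?thesis using b by blast
  qed
qed

end

theorem lemma2p3:
  fixes sc :: "'k::field \<Rightarrow> 'v::ab_group_add \<Rightarrow> 'v" and br :: "'v \<Rightarrow> 'v \<Rightarrow> 'v"
    and A1 A2 :: "'v set"
  assumes "lie_algebra sc br" and "fin_dim sc"
    and "minimal_ideal sc br A1" and "minimal_ideal sc br A2" and "A1 \<noteq> A2"
  shows "\<exists>\<theta>. bij_betw \<theta> {(A1, {0}), (set_plus_v A1 A2, A1)} {(A2, {0}), (set_plus_v A1 A2, A2)}
      \<and> (\<forall>p\<in>{(A1, {0}), (set_plus_v A1 A2, A1)}.
           factor_iso sc br p (\<theta> p)
           \<and> (frattini_chief_factor sc br p \<longleftrightarrow> frattini_chief_factor sc br (\<theta> p)))"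
proof -
  have vs: "vector_space sc" using assms(1) unfolding lie_algebra_def by blast
  then interpret V: vector_space sc .
  obtain B where B: "finite B" "V.span B = UNIV" using assms(2) unfolding fin_dim_def by blast
  obtain B' where B': "B' \<subseteq> B" "V.independent B'" "B \<subseteq> V.span B'"
    using V.maximal_independent_subset[of B] by blast
  have "V.span B \<subseteq> V.span B'" using B'(3) V.span_minimal V.subspace_span by blast
  then have sp: "V.span B' = UNIV" using B(2) by blast
  have fin: "finite B'" using B'(1) B(1) finite_subset by blast
  have "LA sc B' br"
    unfolding LA_def LA_axioms_def finite_dimensional_vector_space_def finite_dimensional_vector_space_axioms_def
    using vs fin B'(2) sp assms(1) unfolding lie_algebra_def by blast
  then show ?thesis using LA.main assms(3,4,5) by blast
qed
end
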